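(* Let $N,\ell$ be sufficiently large positive integers, and suppose $N$ has a prime factor $p$ with $p>2\ell$. Let $m=10\sqrt{\ell}$, let $a$ be an integer, and let $A=\{a,a+1,\ldots,a+m\}$ (the set of integers $a+j$ with $0\le j\le m$). Then $A$ contains an element $b$ such that $b^\ell \not\equiv 1 \pmod N$. *)

theory Defs
  imports Complex_Main "HOL-Number_Theory.Cong"
begin

end

theory Submission
  imports Defs "HOL-Number_Theory.Residues"
begin

lemma roots_int:
  fixes p l :: nat
  assumes "prime p" "l > 0"
  shows "card {y::int. 0 \<le> y \<and> y < int p \<and> [y ^ l = 1] (mod int p)} \<le> l"
proof -
  define A where "A = {x\<in>{..<p}. [x ^ l = 1] (mod p)}"
  have "card A \<le> l" unfolding A_def using roots_mod_prime_bound[OF assms, of 1] by simp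
  moreover have "{y::int. 0 \<le> y \<and> y < int p \<and> [y ^ l = 1] (mod int p)} = int ` A"
  proof (intro equalityI subsetI)
    fix y :: int assume "y \<in> {y::int. 0 \<le> y \<and> y < int p \<and> [y ^ l = 1] (mod int p)}"
    then have y: "0 \<le> y" "y < int p" "[y ^ l = 1] (mod int p)" by auto
    have "[int (nat y ^ l) = int 1] (mod int p)" using y by simp
    then have "[nat y ^ l = 1] (mod p)" using cong_int_iff by blast
    then have "nat y \<in> A" using y unfolding A_def by auto
    then show "y \<in> int ` A" using y by (metis image_eqI int_nat_eq)
  next
    fix y assume "y \<in> int ` A"
    then obtain z where z: "z \<in> A" "y = int z" by auto
    then have "[int (z ^ l) = int 1] (mod int p)" using cong_int_iff unfolding A_def by blast
    then show "y \<in> {y::int. 0 \<le> y \<and> y < int p \<and> [y ^ l = 1] (mod int p)}" using z unfolding A_def by auto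
  qed
  moreover have "finite A" unfolding A_def by simp
  ultimately show ?thesis using card_image_le[of A int] by simp
qed

definition Q :: "int \<Rightarrow> nat \<Rightarrow> int \<Rightarrow> bool" where
  "Q p l y \<longleftrightarrow> [y ^ l = 1] (mod p)"

lemma Q_mult: "Q p l a \<Longrightarrow> Q p l b \<Longrightarrow> Q p l (a * b)"
  unfolding Q_def by (metis cong_mult mult_1 power_mult_distrib)

lemma Q_cancel: "Q p l a \<Longrightarrow> Q p l (a * b) \<Longrightarrow> Q p l b"
  unfolding Q_def power_mult_distrib
  by (metis cong_scalar_right cong_sym cong_trans mult_1)

lemma Q_cong: "[a = b] (mod p) \<Longrightarrow> Q p l a \<Longrightarrow> Q p l b"
  unfolding Q_def by (metis cong_pow cong_sym cong_trans)

lemma Q_nz: "prime p \<Longrightarrow> l > 0 \<Longrightarrow> Q p l a \<Longrightarrow> \<not> p dvd a"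
proof
  assume "prime p" "l > 0" "Q p l a" "p dvd a"
  then have "p dvd a ^ l" using dvd_power[of l a] dvd_trans by blast
  moreover have "p dvd a ^ l - 1" using \<open>Q p l a\<close> unfolding Q_def cong_iff_dvd_diff .
  ultimately have "p dvd 1" by (metis dvd_diff_right_iff)
  then show False using \<open>prime p\<close> by (simp add: not_prime_unit)
qed

lemma covering:
  fixes p x m c :: int
  assumes "p > 0" "2 \<le> c" "c \<le> m + 1" "(c - 1) * m \<ge> p - 1"
  shows "\<exists>i j. 0 \<le> i \<and> i \<le> m \<and> 0 \<le> j \<and> j \<le> m \<and> [c * (x + i) = x + j] (mod p)"
proof -
  define X where "X = x mod p"
  define D where "D = (X - c * X) mod p"
  define i where "i = (D + c - 1) div c"
  define j where "j = c * i - D"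
  have D0: "0 \<le> D" "D \<le> p - 1" unfolding D_def using assms by auto
  have dm: "D + c - 1 = c * i + (D + c - 1) mod c" unfolding i_def by simp
  have "0 \<le> (D + c - 1) mod c" "(D + c - 1) mod c < c" using assms by auto
  then have ci1: "c * i \<le> D + c - 1" and ci2: "c * i > D - 1" using dm by linarith+
  have i0: "0 \<le> i" unfolding i_def using assms D0 by (simp add: pos_imp_zdiv_nonneg_iff)
  have "c * i < c * (m + 1)"
  proof -
    have "c * i \<le> p - 1 + c - 1" using ci1 D0 by linarith
    also have "\<dots> \<le> (c - 1) * m + c - 1" using assms by linarith
    also have "\<dots> < c * (m + 1)" using assms by (simp add: algebra_simps)
    finally show ?thesis .
  qed
  then have "i < m + 1" using assms by (simp add: mult_less_cancel_left_pos)
  then have im: "i \<le> m" by simp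
  have j0: "0 \<le> j" "j \<le> m" unfolding j_def using ci1 ci2 assms by linarith+
  have "[c * (x + i) = c * X + D + j] (mod p)"
  proof -
    have "[c * x = c * X] (mod p)" unfolding X_def by (simp add: cong_def mod_mult_right_eq)
    then have "[c * x + c * i = c * X + c * i] (mod p)" by (rule cong_add) simp
    then show ?thesis unfolding j_def by (simp add: algebra_simps)
  qed
  moreover have "[c * X + D + j = x + j] (mod p)"
  proof -
    have "[D = X - c * X] (mod p)" unfolding D_def by (simp add: cong_def)
    then have "[c * X + D = c * X + (X - c * X)] (mod p)" by (rule cong_add[OF cong_refl])
    then have "[c * X + D = X] (mod p)" by simp
    moreover have "[X = x] (mod p)" unfolding X_def by (simp add: cong_def)
    ultimately have "[c * X + D = x] (mod p)" by (rule cong_trans)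
    then show ?thesis by (rule cong_add) simp
  qed
  ultimately have "[c * (x + i) = x + j] (mod p)" by (rule cong_trans)
  then show ?thesis using i0 im j0 by blast
qed

lemma regimeS:
  fixes p x m :: int and l :: nat
  assumes p: "prime p" and l: "l > 0" and m8: "8 \<le> m" and mp: "m < p"
    and reg: "2 * (p - 1) \<le> m * (m - 4)"
    and hB: "\<And>i. 0 \<le> i \<Longrightarrow> i \<le> m \<Longrightarrow> Q p l (x + i)"
    and hn: "\<exists>n. 1 \<le> n \<and> n < p \<and> \<not> Q p l n"
  shows False
proof -
  have p1: "p > 1" using p prime_gt_1_int by blast
  define u where "u = (p - 1) div m + 2"
  have dm: "p - 1 = m * ((p - 1) div m) + (p - 1) mod m" by simp
  have "0 \<le> (p - 1) mod m" "(p - 1) mod m < m" using m8 by auto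
  moreover have "m * ((p - 1) div m + 1) = m * ((p - 1) div m) + m" by (simp add: algebra_simps)
  ultimately have mu: "m * ((p - 1) div m) \<le> p - 1" and mu2: "m * ((p - 1) div m + 1) > p - 1"
    using dm by linarith+
  have d0: "(p - 1) div m \<ge> 0" using p1 m8 by (simp add: pos_imp_zdiv_nonneg_iff)
  then have u2: "u \<ge> 2" unfolding u_def by simp
  have "m * (2 * u) = 2 * (m * ((p - 1) div m)) + 4 * m" unfolding u_def by (simp add: algebra_simps)
  also have "\<dots> \<le> 2 * (p - 1) + 4 * m" using mu by simp
  also have "\<dots> \<le> m * m" using reg by (simp add: algebra_simps)
  finally have "m * (2 * u) \<le> m * m" .
  then have u2m: "2 * u \<le> m" using m8 by (simp add: mult_le_cancel_left_pos)
  have ex_c: "\<exists>c. u \<le> c \<and> c \<le> m \<and> \<not> Q p l c"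
  proof (rule ccontr)
    assume "\<not> ?thesis"
    then have J: "\<And>c. u \<le> c \<Longrightarrow> c \<le> m \<Longrightarrow> Q p l c" by auto
    have "Q p l u" "Q p l (u * 2)" using J u2 u2m by auto
    then have Q2: "Q p l 2" by (rule Q_cancel)
    have ind: "\<forall>n. 1 \<le> n \<and> n \<le> m \<and> nat (u - n) \<le> k \<longrightarrow> Q p l n" for k
    proof (induction k)
      case 0
      then show ?case using J by auto
    next
      case (Suc k)
      show ?case
      proof (intro allI impI)
        fix n assume n: "1 \<le> n \<and> n \<le> m \<and> nat (u - n) \<le> Suc k"
        show "Q p l n"
        proof (cases "u \<le> n")
          case True then show ?thesis using J n by auto
        next
          case False
          then have "1 \<le> 2 * n \<and> 2 * n \<le> m \<and> nat (u - 2 * n) \<le> k" using n u2m by auto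
          then have "Q p l (2 * n)" using Suc.IH by blast
          then show ?thesis using Q2 Q_cancel by blast
        qed
      qed
    qed
    have all: "Q p l n" if "1 \<le> n" "n \<le> m" for n using ind[of "nat (u - n)"] that by auto
    define S where "S = {n. 1 \<le> n \<and> n < p \<and> \<not> Q p l n}"
    have finS: "finite S" unfolding S_def by (rule finite_subset[of _ "{1..p}"]) auto
    have neS: "S \<noteq> {}" using hn unfolding S_def by auto
    define q where "q = Min S"
    have qS: "q \<in> S" unfolding q_def using finS neS by (rule Min_in)
    have qmin: "\<And>n. 1 \<le> n \<Longrightarrow> n < q \<Longrightarrow> Q p l n"
    proof -
      fix n assume "1 \<le> n" "n < q"
      moreover have "q < p" using qS unfolding S_def by auto
      moreover have "n \<in> S \<Longrightarrow> q \<le> n" unfolding q_def using finS by simp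
      ultimately show "Q p l n" unfolding S_def by fastforce
    qed
    have q1: "1 \<le> q" "q < p" "\<not> Q p l q" using qS unfolding S_def by auto
    have qm: "q > m" using all q1 by force
    define r where "r = (p - 1) div q + 1"
    have dq: "p - 1 = q * ((p - 1) div q) + (p - 1) mod q" by simp
    have "0 \<le> (p - 1) mod q" "(p - 1) mod q < q" using qm m8 by auto
    moreover have "q * r = q * ((p - 1) div q) + q" unfolding r_def by (simp add: algebra_simps)
    ultimately have qr1: "q * r \<ge> p" and qr2: "q * r \<le> p - 1 + q" and qd: "q * ((p - 1) div q) \<le> p - 1"
      using dq by linarith+
    have "q * r \<noteq> p"
    proof
      assume "q * r = p"
      then have "q dvd p" by (metis dvd_triv_left)
      moreover have "\<forall>m. 0 \<le> m \<and> m dvd p \<longrightarrow> m = 1 \<or> m = p" using p unfolding prime_int_iff by blast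
      ultimately have "q = 1 \<or> q = p" using q1(1) by (meson order_trans zero_le_one)
      then show False using qm m8 q1 by auto
    qed
    then have "1 \<le> q * r - p" "q * r - p < q" using qr1 qr2 by auto
    then have "Q p l (q * r - p)" using qmin by blast
    moreover have "[q * r - p = q * r] (mod p)" by (simp add: cong_iff_dvd_diff)
    ultimately have Qqr: "Q p l (r * q)" using Q_cong by (metis mult.commute)
    have r1: "r \<ge> 1" unfolding r_def using p1 qm m8 by (simp add: pos_imp_zdiv_nonneg_iff)
    have "r \<ge> q"
    proof (rule ccontr)
      assume "\<not> r \<ge> q"
      then have "Q p l r" using qmin r1 by auto
      then have "Q p l q" using Qqr Q_cancel by blast
      then show False using q1 by simp
    qed
    then have "q * (q - 1) \<le> q * ((p - 1) div q)" using qm m8 unfolding r_def by simp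
    then have "q * (q - 1) \<le> p - 1" using qd by linarith
    moreover have "(m + 1) * m \<le> q * (q - 1)"
      using qm m8 by (intro mult_mono) auto
    ultimately have "(m + 1) * m \<le> p - 1" by linarith
    moreover have "m * (m - 4) = m * m - 4 * m" "(m + 1) * m = m * m + m" by (simp_all add: algebra_simps)
    moreover have "m * m \<ge> 0" by simp
    ultimately show False using reg m8 by (smt (verit))
  qed
  then obtain c where c: "u \<le> c" "c \<le> m" "\<not> Q p l c" by blast
  have "(c - 1) * m \<ge> ((p - 1) div m + 1) * m" using c m8 unfolding u_def by (intro mult_right_mono) auto
  then have cm: "(c - 1) * m \<ge> p - 1" using mu2 by (simp add: algebra_simps)
  obtain i j where ij: "0 \<le> i" "i \<le> m" "0 \<le> j" "j \<le> m" "[c * (x + i) = x + j] (mod p)"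
    using covering[of p c m x] p1 c u2 cm by auto
  have "Q p l (x + j)" using hB ij by auto
  then have "Q p l ((x + i) * c)" using Q_cong[OF cong_sym[OF ij(5)]] by (simp add: mult.commute)
  then have "Q p l c" using Q_cancel hB ij by blast
  then show False using c by simp
qed

lemma shell:
  "(\<Sum>e\<in>{-int n..int n} \<times> {1..int n}. 1 / real_of_int (max \<bar>fst e\<bar> (snd e))) \<le> 4 * real n"
proof (induction n)
  case 0
  then show ?case by simp
next
  case (Suc n)
  define T where "T = (\<lambda>k::nat. {-int k..int k} \<times> {1..int k})"
  define f where "f = (\<lambda>e::int\<times>int. 1 / real_of_int (max \<bar>fst e\<bar> (snd e)))"
  have sub: "T n \<subseteq> T (Suc n)" unfolding T_def by auto
  have fin: "finite (T (Suc n))" unfolding T_def by simp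
  have cT: "card (T k) = (2 * k + 1) * k" for k
  proof -
    have "nat (2 * int k + 1) = 2 * k + 1" by simp
    then show ?thesis unfolding T_def card_cartesian_product by (simp add: algebra_simps)
  qed
  have "sum f (T (Suc n)) = sum f (T (Suc n) - T n) + sum f (T n)"
    using sum.subset_diff[OF sub fin] by simp
  moreover have "sum f (T (Suc n) - T n) = real (card (T (Suc n) - T n)) * (1 / real (Suc n))"
  proof -
    have "f e = 1 / real (Suc n)" if "e \<in> T (Suc n) - T n" for e
    proof -
      obtain a b where e: "e = (a, b)" by (cases e)
      have "\<bar>a\<bar> \<le> int n + 1" "1 \<le> b" "b \<le> int n + 1" "\<bar>a\<bar> > int n \<or> b > int n"
        using that unfolding T_def e by auto
      then have "max \<bar>a\<bar> b = int n + 1" by auto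
      then show ?thesis unfolding f_def e by simp
    qed
    then show ?thesis by (simp add: sum.cong[of _ _ f "\<lambda>_. 1 / real (Suc n)"])
  qed
  moreover have "card (T (Suc n) - T n) = 4 * n + 3"
  proof -
    have "card (T (Suc n) - T n) = card (T (Suc n)) - card (T n)"
      using sub fin by (simp add: card_Diff_subset finite_subset)
    also have "\<dots> = 4 * n + 3" unfolding cT by (simp add: algebra_simps)
    finally show ?thesis .
  qed
  moreover have "sum f (T n) \<le> 4 * real n" using Suc.IH unfolding f_def T_def .
  moreover have "real (4 * n + 3) * (1 / real (Suc n)) \<le> 4"
    by (simp add: field_simps)
  ultimately have "sum f (T (Suc n)) \<le> 4 * real (Suc n)" by simp
  then show ?case unfolding f_def T_def .
qed

lemma card_dvd_bound:
  fixes S :: "int set" and M b :: int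
  assumes "S \<subseteq> {0..M}" "b \<ge> 1" "M \<ge> 0" "\<And>s t. s \<in> S \<Longrightarrow> t \<in> S \<Longrightarrow> b dvd (s - t)"
  shows "int (card S) \<le> M div b + 1"
proof (cases "S = {}")
  case True
  then show ?thesis using assms by (simp add: pos_imp_zdiv_nonneg_iff)
next
  case False
  then obtain s0 where s0: "s0 \<in> S" by auto
  have inj: "inj_on (\<lambda>s. s div b) S"
  proof (rule inj_onI)
    fix s t assume st: "s \<in> S" "t \<in> S" "s div b = t div b"
    have "s mod b = t mod b" using assms(4)[OF st(1,2)] by (simp add: mod_eq_dvd_iff)
    have "s = s div b * b + s mod b" by simp
    also have "\<dots> = t div b * b + t mod b" using st(3) \<open>s mod b = t mod b\<close> by simp
    also have "\<dots> = t" by simp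
    finally show "s = t" .
  qed
  have sub: "(\<lambda>s. s div b) ` S \<subseteq> {0..M div b}"
  proof
    fix y assume "y \<in> (\<lambda>s. s div b) ` S"
    then obtain s where s: "s \<in> S" "y = s div b" by auto
    then have "0 \<le> s" "s \<le> M" using assms(1) by auto
    then show "y \<in> {0..M div b}" using s assms(2) by (auto simp: pos_imp_zdiv_nonneg_iff zdiv_mono1)
  qed
  have "card S = card ((\<lambda>s. s div b) ` S)" using inj by (simp add: card_image)
  also have "\<dots> \<le> card {0..M div b}" using sub by (intro card_mono) auto
  finally have c0: "card S \<le> card {0..M div b}" .
  have c1: "int (card S) \<le> int (card {0..M div b})" using c0 by (simp only: of_nat_le_iff)
  have "M div b \<ge> 0" using assms(2,3) by (simp add: pos_imp_zdiv_nonneg_iff)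
  then have "int (card {0..M div b}) = M div b + 1" by simp
  with c1 show ?thesis by simp
qed

lemma small_dvd_zero:
  fixes p d :: int
  assumes "p dvd d" "\<bar>d\<bar> < p"
  shows "d = 0"
proof (rule ccontr)
  assume "d \<noteq> 0"
  then have "\<bar>p\<bar> \<le> \<bar>d\<bar>" using dvd_imp_le_int assms(1) by blast
  then show False using assms(2) by linarith
qed

context
  fixes p x M :: int and l :: nat
  assumes p: "prime p" and l: "l > 0" and M0: "0 \<le> M" and Mp: "2 * (M * M) < p"
    and hB: "\<And>i. 0 \<le> i \<Longrightarrow> i \<le> M \<Longrightarrow> Q p l (x + i)"
begin

lemma p1: "p > 1" using p prime_gt_1_int by blast

lemma Mlt: "M < p"
proof -
  have "M \<le> M * M \<or> M = 0" using M0 by (cases "M \<ge> 1") (auto simp: mult_le_cancel_left1)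
  then show ?thesis using Mp p1 M0 by auto
qed

lemma unit: "0 \<le> i \<Longrightarrow> i \<le> M \<Longrightarrow> \<not> p dvd (x + i)"
  using Q_nz[OF p l hB] .

lemma small_nd: "0 < g \<Longrightarrow> g \<le> M \<Longrightarrow> \<not> p dvd g"
proof
  assume "0 < g" "g \<le> M" "p dvd g"
  then have "p \<le> g" using zdvd_imp_le by blast
  then show False using Mlt \<open>g \<le> M\<close> by linarith
qed

lemma cancel: "0 \<le> i \<Longrightarrow> i \<le> M \<Longrightarrow> p dvd (E * (x + i)) \<Longrightarrow> p dvd E"
  using unit[of i] prime_dvd_mult_iff[OF p, of E "x + i"] by blast

definition iv :: "int \<Rightarrow> int" where "iv y = (SOME z. [y * z = 1] (mod p))"

lemma iv: assumes "0 \<le> j" "j \<le> M" shows "p dvd ((x + j) * iv (x + j) - 1)"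
proof -
  have "coprime (x + j) p" using unit[OF assms] p by (metis prime_imp_coprime coprime_commute)
  then have "\<exists>z. [(x + j) * z = 1] (mod p)" by (rule cong_solve_coprime_int)
  then have "[(x + j) * iv (x + j) = 1] (mod p)" unfolding iv_def by (rule someI_ex)
  then show ?thesis by (simp add: cong_iff_dvd_diff)
qed

definition phi :: "int \<times> int \<Rightarrow> int" where
  "phi e = ((x + fst e) * iv (x + snd e)) mod p"

lemma phi_eq:
  assumes "0 \<le> i" "i \<le> M" "0 \<le> j" "j \<le> M" "0 \<le> i'" "i' \<le> M" "0 \<le> j'" "j' \<le> M"
  shows "phi (i, j) = phi (i', j') \<longleftrightarrow> p dvd ((x + i) * (x + j') - (x + i') * (x + j))"
proof -
  define a where "a = x + i"
  define b where "b = x + j"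
  define a' where "a' = x + i'"
  define b' where "b' = x + j'"
  define ib where "ib = iv b"
  define ib' where "ib' = iv b'"
  have hb: "p dvd (b * ib - 1)" "p dvd (b' * ib' - 1)" using iv assms unfolding a_def b_def a'_def b'_def ib_def ib'_def by auto
  have "phi (i, j) = phi (i', j') \<longleftrightarrow> p dvd (a * ib - a' * ib')"
    unfolding phi_def a_def b_def a'_def b'_def ib_def ib'_def by (simp add: mod_eq_dvd_iff)
  also have "\<dots> \<longleftrightarrow> p dvd (a * b' - a' * b)"
  proof
    assume h: "p dvd (a * ib - a' * ib')"
    have eq: "a * b' - a' * b = (a * ib - a' * ib') * b * b' - a * b' * (b * ib - 1) + a' * b * (b' * ib' - 1)"
      by (simp add: algebra_simps)
    have "p dvd (a * ib - a' * ib') * b * b'" using h by (intro dvd_mult2)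
    moreover have "p dvd a * b' * (b * ib - 1)" using hb(1) by (rule dvd_mult)
    moreover have "p dvd a' * b * (b' * ib' - 1)" using hb(2) by (rule dvd_mult)
    ultimately show "p dvd (a * b' - a' * b)" unfolding eq by (intro dvd_add dvd_diff)
  next
    assume h: "p dvd (a * b' - a' * b)"
    have eq: "a * ib - a' * ib' = (a * b' - a' * b) * ib * ib' - a * ib * (b' * ib' - 1) + a' * ib' * (b * ib - 1)"
      by (simp add: algebra_simps)
    have "p dvd (a * b' - a' * b) * ib * ib'" using h by (intro dvd_mult2)
    moreover have "p dvd a * ib * (b' * ib' - 1)" using hb(2) by (rule dvd_mult)
    moreover have "p dvd a' * ib' * (b * ib - 1)" using hb(1) by (rule dvd_mult)
    ultimately show "p dvd (a * ib - a' * ib')" unfolding eq by (intro dvd_add dvd_diff)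
  qed
  finally show ?thesis unfolding a_def b_def a'_def b'_def .
qed

lemma phi_Q:
  assumes "0 \<le> i" "i \<le> M" "0 \<le> j" "j \<le> M"
  shows "0 \<le> phi (i, j) \<and> phi (i, j) < p \<and> Q p l (phi (i, j))"
proof -
  have hb: "[(x + j) * iv (x + j) = 1] (mod p)" using iv assms by (simp add: cong_iff_dvd_diff)
  have "Q p l 1" unfolding Q_def by simp
  then have "Q p l ((x + j) * iv (x + j))" using Q_cong[OF cong_sym[OF hb]] by simp
  then have "Q p l (iv (x + j))" using Q_cancel[OF hB[OF assms(3,4)]] by simp
  then have "Q p l ((x + i) * iv (x + j))" using Q_mult[OF hB[OF assms(1,2)]] by simp
  then have "Q p l (phi (i, j))" unfolding phi_def by (rule Q_cong[rotated]) (simp add: cong_def)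
  then show ?thesis unfolding phi_def using p1 by simp
qed


lemma class_two:
  assumes C: "C \<subseteq> {0..M} \<times> {0..M}"
    and rel: "\<And>i j i' j'. (i, j) \<in> C \<Longrightarrow> (i', j') \<in> C \<Longrightarrow> p dvd ((x + i) * (x + j') - (x + i') * (x + j))"
    and e0: "(i0, j0) \<in> C" and e1: "(i1, j1) \<in> C" and jlt: "j0 < j1"
  shows "\<exists>a b. 1 \<le> b \<and> b \<le> M \<and> \<bar>a\<bar> \<le> M \<and> (\<forall>e\<in>C. p dvd (b * (x + fst e) - a * (x + snd e)))
           \<and> int (card C) \<le> M div max \<bar>a\<bar> b + 1"
proof -
  have b0: "0 \<le> i0" "i0 \<le> M" "0 \<le> j0" "j0 \<le> M" using e0 C by auto
  have b1: "0 \<le> i1" "i1 \<le> M" "0 \<le> j1" "j1 \<le> M" using e1 C by auto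
  have finC: "finite C" using C by (rule finite_subset) auto
  define di where "di = i1 - i0"
  define dj where "dj = j1 - j0"
  define g where "g = gcd di dj"
  define a where "a = di div g"
  define b where "b = dj div g"
  have dj0: "dj > 0" unfolding dj_def using jlt by simp
  have g0: "g > 0" unfolding g_def using dj0 by simp
  have dia: "di = a * g" unfolding a_def g_def by simp
  have djb: "dj = b * g" unfolding b_def g_def by simp
  have bpos: "b > 0"
  proof (rule ccontr)
    assume "\<not> b > 0"
    then have "b * g \<le> 0" using g0 by (simp add: mult_nonpos_nonneg)
    then show False using djb dj0 by simp
  qed
  have "b * 1 \<le> b * g" using bpos g0 by (intro mult_left_mono) auto
  then have bdj: "b \<le> dj" using djb by simp
  have bM: "b \<le> M" using bdj b0 b1 unfolding dj_def by simp
  have "\<bar>a\<bar> * 1 \<le> \<bar>a\<bar> * g" using g0 by (intro mult_left_mono) auto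
  then have "\<bar>a\<bar> \<le> \<bar>di\<bar>" using dia g0 by (simp add: abs_mult)
  then have aM: "\<bar>a\<bar> \<le> M" using b0 b1 unfolding di_def by simp
  have cop: "coprime a b" unfolding a_def b_def g_def using dj0 by (intro div_gcd_coprime) simp
  have gM: "g \<le> M"
  proof -
    have "g dvd dj" unfolding g_def by simp
    then have "g \<le> dj" using dj0 by (rule zdvd_imp_le)
    then show ?thesis using b0 b1 unfolding dj_def by simp
  qed
  have "p dvd ((x + i0) * (x + j1) - (x + i1) * (x + j0))" using rel[OF e0 e1] .
  moreover have "(x + i0) * (x + j1) - (x + i1) * (x + j0) = g * (b * (x + i0) - a * (x + j0))"
  proof -
    have "i1 = i0 + a * g" "j1 = j0 + b * g" using dia djb unfolding di_def dj_def by simp_all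
    then show ?thesis by (simp add: algebra_simps)
  qed
  ultimately have "p dvd g * (b * (x + i0) - a * (x + j0))" by simp
  then have E0: "p dvd (b * (x + i0) - a * (x + j0))"
    using prime_dvd_mult_iff[OF p] small_nd[OF g0 gM] by blast
  have Eall: "p dvd (b * (x + i) - a * (x + j))" if ij: "(i, j) \<in> C" for i j
  proof -
    have r: "p dvd ((x + i) * (x + j0) - (x + i0) * (x + j))" using rel[OF ij e0] .
    have eq: "(b * (x + i) - a * (x + j)) * (x + j0) = b * ((x + i) * (x + j0) - (x + i0) * (x + j)) + (x + j) * (b * (x + i0) - a * (x + j0))"
      by (simp add: algebra_simps)
    have "p dvd b * ((x + i) * (x + j0) - (x + i0) * (x + j)) + (x + j) * (b * (x + i0) - a * (x + j0))"
      using r E0 by (intro dvd_add dvd_mult)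
    then have "p dvd (b * (x + i) - a * (x + j)) * (x + j0)" unfolding eq .
    then show ?thesis using cancel[OF b0(3,4)] by blast
  qed
  have lin: "b * (i - i') = a * (j - j')" if "(i, j) \<in> C" "(i', j') \<in> C" for i j i' j'
  proof -
    have bi: "0 \<le> i" "i \<le> M" "0 \<le> j" "j \<le> M" "0 \<le> i'" "i' \<le> M" "0 \<le> j'" "j' \<le> M"
      using that C by auto
    have "p dvd (b * (x + i) - a * (x + j)) - (b * (x + i') - a * (x + j'))"
      using Eall[OF that(1)] Eall[OF that(2)] by (rule dvd_diff)
    moreover have "(b * (x + i) - a * (x + j)) - (b * (x + i') - a * (x + j')) = b * (i - i') - a * (j - j')"
      by (simp add: algebra_simps)
    ultimately have dv: "p dvd (b * (i - i') - a * (j - j'))" by simp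
    have "\<bar>b * (i - i')\<bar> \<le> M * M" unfolding abs_mult using bi bM bpos by (intro mult_mono) auto
    moreover have "\<bar>a * (j - j')\<bar> \<le> M * M" unfolding abs_mult using bi aM by (intro mult_mono) auto
    ultimately have "\<bar>b * (i - i') - a * (j - j')\<bar> < p" using Mp by linarith
    then have "b * (i - i') - a * (j - j') = 0" using dv small_dvd_zero by blast
    then show ?thesis by simp
  qed
  have cs: "int (card C) \<le> M div b + 1"
  proof -
    have inj: "inj_on snd C"
    proof (rule inj_onI)
      fix e e' assume ee: "e \<in> C" "e' \<in> C" "snd e = snd e'"
      obtain i j where e: "e = (i, j)" by (cases e)
      obtain i' j' where e': "e' = (i', j')" by (cases e')
      have "b * (i - i') = a * (j - j')" using lin ee e e' by simp
      then have "b * (i - i') = 0" using ee e e' by simp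
      then have "i = i'" using bpos by simp
      then show "e = e'" using ee e e' by simp
    qed
    have "int (card (snd ` C)) \<le> M div b + 1"
    proof (rule card_dvd_bound)
      show "snd ` C \<subseteq> {0..M}" using C by auto
      show "b \<ge> 1" using bpos by simp
      show "M \<ge> 0" by (rule M0)
      fix s t assume "s \<in> snd ` C" "t \<in> snd ` C"
      then obtain i i' where st: "(i, s) \<in> C" "(i', t) \<in> C" by force
      have "b dvd a * (s - t)" using lin[OF st] by (metis dvd_triv_left)
      moreover have "coprime b a" using cop by (simp add: coprime_commute)
      ultimately show "b dvd (s - t)" by (simp add: coprime_dvd_mult_right_iff)
    qed
    then show ?thesis using card_image[OF inj] by simp
  qed
  have ca: "int (card C) \<le> M div \<bar>a\<bar> + 1" if a0: "a \<noteq> 0"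
  proof -
    have inj: "inj_on fst C"
    proof (rule inj_onI)
      fix e e' assume ee: "e \<in> C" "e' \<in> C" "fst e = fst e'"
      obtain i j where e: "e = (i, j)" by (cases e)
      obtain i' j' where e': "e' = (i', j')" by (cases e')
      have m1: "(i, j) \<in> C" "(i', j') \<in> C" using ee e e' by simp_all
      have l1: "b * (i - i') = a * (j - j')" using lin[OF m1] .
      have "i = i'" using ee e e' by simp
      then have "a * (j - j') = 0" using l1 by simp
      then have "j = j'" using a0 by simp
      then show "e = e'" using ee e e' by simp
    qed
    have "int (card (fst ` C)) \<le> M div \<bar>a\<bar> + 1"
    proof (rule card_dvd_bound)
      show "fst ` C \<subseteq> {0..M}" using C by auto
      show "\<bar>a\<bar> \<ge> 1" using a0 by simp
      show "M \<ge> 0" by (rule M0)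
      fix s t assume "s \<in> fst ` C" "t \<in> fst ` C"
      then obtain j j' where st: "(s, j) \<in> C" "(t, j') \<in> C" by force
      have "a dvd b * (s - t)" using lin[OF st] by (metis dvd_triv_left)
      then have "a dvd (s - t)" using cop by (simp add: coprime_dvd_mult_right_iff)
      then show "\<bar>a\<bar> dvd (s - t)" by simp
    qed
    then show ?thesis using card_image[OF inj] by simp
  qed
  have "int (card C) \<le> M div max \<bar>a\<bar> b + 1"
  proof (cases "\<bar>a\<bar> \<le> b")
    case True
    then have "max \<bar>a\<bar> b = b" by simp
    then show ?thesis using cs by simp
  next
    case False
    then have "max \<bar>a\<bar> b = \<bar>a\<bar>" "a \<noteq> 0" using bpos by auto
    then show ?thesis using ca by simp
  qed
  then show ?thesis using bpos bM aM Eall by (intro exI[of _ a] exI[of _ b]) auto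
qed


lemma class_big:
  assumes "2 \<le> card {e \<in> {0..M} \<times> {0..M}. phi e = r}"
  shows "\<exists>a b. 1 \<le> b \<and> b \<le> M \<and> \<bar>a\<bar> \<le> M
     \<and> (\<forall>e\<in>{e \<in> {0..M} \<times> {0..M}. phi e = r}. p dvd (b * (x + fst e) - a * (x + snd e)))
     \<and> int (card {e \<in> {0..M} \<times> {0..M}. phi e = r}) \<le> M div max \<bar>a\<bar> b + 1"
proof -
  define C where "C = {e \<in> {0..M} \<times> {0..M}. phi e = r}"
  have C: "C \<subseteq> {0..M} \<times> {0..M}" unfolding C_def by auto
  have finC: "finite C" using C by (rule finite_subset) auto
  have rel: "p dvd ((x + i) * (x + j') - (x + i') * (x + j))" if "(i, j) \<in> C" "(i', j') \<in> C" for i j i' j'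
  proof -
    have "phi (i, j) = phi (i', j')" using that unfolding C_def by auto
    moreover have "0 \<le> i" "i \<le> M" "0 \<le> j" "j \<le> M" "0 \<le> i'" "i' \<le> M" "0 \<le> j'" "j' \<le> M"
      using that C by auto
    ultimately show ?thesis using phi_eq by blast
  qed
  have "card C \<ge> 2" using assms unfolding C_def .
  then have "C \<noteq> {}" by auto
  then obtain e1 where e1: "e1 \<in> C" by auto
  have "\<exists>e2\<in>C. e2 \<noteq> e1"
  proof (rule ccontr)
    assume "\<not> ?thesis"
    then have "C \<subseteq> {e1}" by auto
    then have "card C \<le> 1" using card_mono[of "{e1}" C] by simp
    then show False using \<open>card C \<ge> 2\<close> by simp
  qed
  then obtain e2 where e2: "e2 \<in> C" "e2 \<noteq> e1" by auto
  obtain i1 j1 where e1': "e1 = (i1, j1)" by (cases e1)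
  obtain i2 j2 where e2': "e2 = (i2, j2)" by (cases e2)
  have m1: "(i1, j1) \<in> C" "(i2, j2) \<in> C" using e1 e2 e1' e2' by auto
  have bb: "0 \<le> i1" "i1 \<le> M" "0 \<le> j1" "j1 \<le> M" "0 \<le> i2" "i2 \<le> M" "0 \<le> j2" "j2 \<le> M"
    using m1 C by auto
  have "j1 \<noteq> j2"
  proof
    assume jj: "j1 = j2"
    have "p dvd ((x + i1) * (x + j2) - (x + i2) * (x + j1))" using rel[OF m1] .
    moreover have "(x + i1) * (x + j2) - (x + i2) * (x + j1) = (i1 - i2) * (x + j1)" using jj by (simp add: algebra_simps)
    ultimately have "p dvd (i1 - i2) * (x + j1)" by simp
    then have "p dvd (i1 - i2)" using cancel[OF bb(3,4)] by blast
    moreover have "\<bar>i1 - i2\<bar> < p" using bb Mlt by linarith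
    ultimately have "i1 = i2" using small_dvd_zero by fastforce
    then show False using jj e1' e2' e2(2) by simp
  qed
  then have "j1 < j2 \<or> j2 < j1" by linarith
  then have "\<exists>a b. 1 \<le> b \<and> b \<le> M \<and> \<bar>a\<bar> \<le> M \<and> (\<forall>e\<in>C. p dvd (b * (x + fst e) - a * (x + snd e)))
           \<and> int (card C) \<le> M div max \<bar>a\<bar> b + 1"
  proof
    assume "j1 < j2"
    show ?thesis by (rule class_two[OF C _ m1 \<open>j1 < j2\<close>]) (rule rel)
  next
    assume "j2 < j1"
    show ?thesis by (rule class_two[OF C _ m1(2) m1(1) \<open>j2 < j1\<close>]) (rule rel)
  qed
  then show ?thesis unfolding C_def .
qed

lemma w_inj:
  assumes "1 \<le> b" "b \<le> M"
    and h1: "\<forall>e\<in>{e \<in> {0..M} \<times> {0..M}. phi e = r}. p dvd (b * (x + fst e) - a * (x + snd e))"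
    and h2: "\<forall>e\<in>{e \<in> {0..M} \<times> {0..M}. phi e = r'}. p dvd (b * (x + fst e) - a * (x + snd e))"
    and r: "r \<in> phi ` ({0..M} \<times> {0..M})" and r': "r' \<in> phi ` ({0..M} \<times> {0..M})"
  shows "r = r'"
proof -
  obtain i j where ij: "(i, j) \<in> {0..M} \<times> {0..M}" "phi (i, j) = r" using r by auto
  obtain i' j' where ij': "(i', j') \<in> {0..M} \<times> {0..M}" "phi (i', j') = r'" using r' by auto
  have d1: "p dvd (b * (x + i) - a * (x + j))" using h1 ij by auto
  have d2: "p dvd (b * (x + i') - a * (x + j'))" using h2 ij' by auto
  have eq: "b * ((x + i) * (x + j') - (x + i') * (x + j)) = (x + j') * (b * (x + i) - a * (x + j)) - (x + j) * (b * (x + i') - a * (x + j'))"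
    by (simp add: algebra_simps)
  have "p dvd (x + j') * (b * (x + i) - a * (x + j))" using d1 by (rule dvd_mult)
  moreover have "p dvd (x + j) * (b * (x + i') - a * (x + j'))" using d2 by (rule dvd_mult)
  ultimately have "p dvd (x + j') * (b * (x + i) - a * (x + j)) - (x + j) * (b * (x + i') - a * (x + j'))"
    by (rule dvd_diff)
  then have "p dvd b * ((x + i) * (x + j') - (x + i') * (x + j))" unfolding eq .
  moreover have "\<not> p dvd b" using small_nd assms by simp
  ultimately have "p dvd ((x + i) * (x + j') - (x + i') * (x + j))" using prime_dvd_mult_iff[OF p] by blast
  then have "phi (i, j) = phi (i', j')" using phi_eq ij ij' by auto
  then show ?thesis using ij ij' by simp
qed


lemma main_count:
  assumes roots: "card {y. 0 \<le> y \<and> y < p \<and> Q p l y} \<le> l"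
  shows "real_of_int ((M + 1) * (M + 1)) \<le> 8 * real l + 4 * real_of_int M * real_of_int (M div 8)
           + real_of_int ((2 * (M div 8) + 1) * (M div 8))"
proof -
  define Bx where "Bx = {0..M} \<times> {0..M}"
  define R where "R = phi ` Bx"
  define C where "C r = {e \<in> Bx. phi e = r}" for r
  define H where "H = M div 8"
  have H0: "H \<ge> 0" unfolding H_def using M0 by simp
  have finB: "finite Bx" unfolding Bx_def by simp
  have finR: "finite R" unfolding R_def using finB by simp
  have "int (card Bx) = (M + 1) * (M + 1)" unfolding Bx_def card_cartesian_product using M0 by simp
  then have cardB: "real (card Bx) = real_of_int ((M + 1) * (M + 1))" by (metis of_int_of_nat_eq)
  have cardR: "card R \<le> l"
  proof -
    have "R \<subseteq> {y. 0 \<le> y \<and> y < p \<and> Q p l y}" unfolding R_def Bx_def using phi_Q by auto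
    moreover have "finite {y. 0 \<le> y \<and> y < p \<and> Q p l y}" by (rule finite_subset[of _ "{0..p}"]) auto
    ultimately have "card R \<le> card {y. 0 \<le> y \<and> y < p \<and> Q p l y}" by (rule card_mono[rotated])
    then show ?thesis using roots by linarith
  qed
  have "card Bx = (\<Sum>r\<in>R. card (C r))"
  proof -
    have "card Bx = (\<Sum>e\<in>Bx. 1::nat)" by simp
    also have "\<dots> = (\<Sum>r\<in>R. (\<Sum>e\<in>{e. e \<in> Bx \<and> phi e = r}. 1::nat))"
      unfolding R_def by (rule sum.image_gen[OF finB])
    also have "\<dots> = (\<Sum>r\<in>R. card (C r))" unfolding C_def by simp
    finally show ?thesis .
  qed
  then have sumR: "real (card Bx) = (\<Sum>r\<in>R. real (card (C r)))" by simp
  define Rb where "Rb = {r \<in> R. card (C r) > 8}"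
  have RbR: "Rb \<subseteq> R" unfolding Rb_def by auto
  have split: "(\<Sum>r\<in>R. real (card (C r))) = (\<Sum>r\<in>R - Rb. real (card (C r))) + (\<Sum>r\<in>Rb. real (card (C r)))"
    using sum.subset_diff[OF RbR finR] by simp
  have small: "(\<Sum>r\<in>R - Rb. real (card (C r))) \<le> 8 * real l"
  proof -
    have "(\<Sum>r\<in>R - Rb. real (card (C r))) \<le> real (card (R - Rb)) * 8"
      by (rule sum_bounded_above) (auto simp: Rb_def)
    also have "\<dots> \<le> real (card R) * 8" using card_mono[OF finR, of "R - Rb"] by auto
    also have "\<dots> \<le> 8 * real l" using cardR by simp
    finally show ?thesis .
  qed
  define Pr where "Pr r ab \<longleftrightarrow> 1 \<le> snd ab \<and> snd ab \<le> M \<and> \<bar>fst ab\<bar> \<le> M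
     \<and> (\<forall>e\<in>C r. p dvd (snd ab * (x + fst e) - fst ab * (x + snd e)))
     \<and> int (card (C r)) \<le> M div max \<bar>fst ab\<bar> (snd ab) + 1" for r ab
  define w where "w r = (SOME ab. Pr r ab)" for r
  have Pw: "Pr r (w r)" if "r \<in> Rb" for r
  proof -
    have "2 \<le> card {e \<in> {0..M} \<times> {0..M}. phi e = r}" using that unfolding Rb_def C_def Bx_def by auto
    from class_big[OF this] obtain a b where "Pr r (a, b)" unfolding Pr_def C_def Bx_def by auto
    then have "\<exists>ab. Pr r ab" by blast
    then show ?thesis unfolding w_def by (rule someI_ex)
  qed
  have inj: "inj_on w Rb"
  proof (rule inj_onI)
    fix r r' assume rr: "r \<in> Rb" "r' \<in> Rb" "w r = w r'"
    have P1: "Pr r (w r)" using Pw[OF rr(1)] .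
    have P2: "Pr r' (w r)" using Pw[OF rr(2)] rr(3) by simp
    show "r = r'"
    proof (rule w_inj)
      show "1 \<le> snd (w r)" "snd (w r) \<le> M" using P1 unfolding Pr_def by auto
      show "\<forall>e\<in>{e \<in> {0..M} \<times> {0..M}. phi e = r}. p dvd (snd (w r) * (x + fst e) - fst (w r) * (x + snd e))"
        using P1 unfolding Pr_def C_def Bx_def by blast
      show "\<forall>e\<in>{e \<in> {0..M} \<times> {0..M}. phi e = r'}. p dvd (snd (w r) * (x + fst e) - fst (w r) * (x + snd e))"
        using P2 unfolding Pr_def C_def Bx_def by blast
      show "r \<in> phi ` ({0..M} \<times> {0..M})" "r' \<in> phi ` ({0..M} \<times> {0..M})"
        using rr RbR unfolding R_def Bx_def by auto
    qed
  qed
  define F where "F ab = real_of_int M * (1 / real_of_int (max \<bar>fst ab\<bar> (snd ab))) + 1" for ab :: "int \<times> int"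
  define W where "W = {-H..H} \<times> {1..H}"
  have finW: "finite W" unfolding W_def by simp
  have Fw: "real (card (C r)) \<le> F (w r)" and wW: "w r \<in> W" if r: "r \<in> Rb" for r
  proof -
    obtain a b where ab: "w r = (a, b)" by (cases "w r")
    have P: "1 \<le> b" "b \<le> M" "\<bar>a\<bar> \<le> M" "int (card (C r)) \<le> M div max \<bar>a\<bar> b + 1"
      using Pw[OF r] unfolding ab Pr_def by auto
    define h where "h = max \<bar>a\<bar> b"
    have h1: "h \<ge> 1" unfolding h_def using P by simp
    have "real (card (C r)) = real_of_int (int (card (C r)))" by simp
    also have "\<dots> \<le> real_of_int (M div h) + 1" using P unfolding h_def by linarith
    also have "\<dots> \<le> real_of_int M / real_of_int h + 1" using real_of_int_div4[of M h] by linarith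
    finally show "real (card (C r)) \<le> F (w r)" unfolding F_def ab h_def by simp
    have "card (C r) > 8" using r unfolding Rb_def by auto
    then have "M div h \<ge> 8" using P unfolding h_def by linarith
    moreover have "M div h * h \<le> M"
    proof -
      have "M = M div h * h + M mod h" by simp
      moreover have "M mod h \<ge> 0" using h1 by simp
      ultimately show ?thesis by linarith
    qed
    moreover have "8 * h \<le> M div h * h" using \<open>M div h \<ge> 8\<close> h1 by (intro mult_right_mono) auto
    ultimately have "8 * h \<le> M" by linarith
    then have "(8 * h) div 8 \<le> M div 8" by (intro zdiv_mono1) auto
    then have "h \<le> H" unfolding H_def by simp
    then show "w r \<in> W" unfolding W_def ab h_def using P by auto
  qed
  have big: "(\<Sum>r\<in>Rb. real (card (C r))) \<le> (\<Sum>ab\<in>W. F ab)"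
  proof -
    have "(\<Sum>r\<in>Rb. real (card (C r))) \<le> (\<Sum>r\<in>Rb. F (w r))" using Fw by (rule sum_mono)
    also have "\<dots> = (\<Sum>ab\<in>w ` Rb. F ab)" using sum.reindex[OF inj, of F] by simp
    also have "\<dots> \<le> (\<Sum>ab\<in>W. F ab)"
    proof (rule sum_mono2[OF finW])
      show "w ` Rb \<subseteq> W" using wW by auto
      show "\<And>ab. ab \<in> W - w ` Rb \<Longrightarrow> 0 \<le> F ab" unfolding F_def W_def using M0 by auto
    qed
    finally show ?thesis .
  qed
  have sumW: "(\<Sum>ab\<in>W. F ab) \<le> 4 * real_of_int M * real_of_int H + real_of_int ((2 * H + 1) * H)"
  proof -
    have "(\<Sum>ab\<in>W. F ab) = real_of_int M * (\<Sum>ab\<in>W. 1 / real_of_int (max \<bar>fst ab\<bar> (snd ab))) + real (card W)"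
      unfolding F_def by (simp add: sum.distrib sum_distrib_left)
    moreover have "(\<Sum>ab\<in>W. 1 / real_of_int (max \<bar>fst ab\<bar> (snd ab))) \<le> 4 * real_of_int H"
    proof -
      have "W = {-int (nat H)..int (nat H)} \<times> {1..int (nat H)}" unfolding W_def using H0 by simp
      then show ?thesis using shell[of "nat H"] H0 by simp
    qed
    moreover have "real (card W) = real_of_int ((2 * H + 1) * H)"
    proof -
      have "int (card W) = (2 * H + 1) * H" unfolding W_def card_cartesian_product using H0 by simp
      then show ?thesis by (metis of_int_of_nat_eq)
    qed
    moreover have "real_of_int M * (\<Sum>ab\<in>W. 1 / real_of_int (max \<bar>fst ab\<bar> (snd ab))) \<le> real_of_int M * (4 * real_of_int H)"
      using calculation(2) M0 by (intro mult_left_mono) auto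
    ultimately show ?thesis by (simp add: algebra_simps)
  qed
  show ?thesis using cardB sumR split small big sumW unfolding H_def by linarith
qed

end

theorem claim2p5:
  shows "\<exists>N0 L0 :: nat. \<forall>(N::nat) (l::nat). N \<ge> N0 \<longrightarrow> l \<ge> L0 \<longrightarrow>
           (\<exists>p::nat. prime p \<and> p dvd N \<and> p > 2 * l) \<longrightarrow>
           (\<forall>a::int. \<exists>j::nat. real j \<le> 10 * sqrt (real l) \<and>
                \<not> [(a + int j) ^ l = 1] (mod (int N)))"
proof (rule exI[of _ 0], rule exI[of _ 10000], intro allI impI)
  fix N l :: nat and a :: int
  assume "N \<ge> 0" and l: "l \<ge> 10000" and "\<exists>p::nat. prime p \<and> p dvd N \<and> p > 2 * l"
  then obtain p :: nat where p: "prime p" "p dvd N" "p > 2 * l" by blast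
  show "\<exists>j::nat. real j \<le> 10 * sqrt (real l) \<and> \<not> [(a + int j) ^ l = 1] (mod (int N))"
  proof (rule ccontr)
    assume "\<not> ?thesis"
    then have hall: "\<And>j. real j \<le> 10 * sqrt (real l) \<Longrightarrow> [(a + int j) ^ l = 1] (mod (int N))" by blast
    define s where "s = sqrt (real l)"
    have "(100::real)^2 \<le> real l" using l by simp
    then have s100: "s \<ge> 100" unfolding s_def by (rule real_le_rsqrt)
    have ls: "real l = s * s" unfolding s_def by (simp add: real_sqrt_mult_self)
    have l0: "l > 0" using l by simp
    define m :: nat where "m = nat \<lfloor>10 * s\<rfloor>"
    have fl0: "\<lfloor>10 * s\<rfloor> \<ge> 0" using s100 by simp
    have mle: "real m \<le> 10 * s" unfolding m_def using fl0 by simp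
    have mge: "real m \<ge> 10 * s - 1" unfolding m_def using fl0 floor_correct[of "10 * s"] by simp
    define P where "P = int p"
    have Pp: "prime P" unfolding P_def using p(1) by simp
    have PN: "P dvd int N" unfolding P_def using p(2) by simp
    have hB: "Q P l (a + i)" if "0 \<le> i" "i \<le> int m" for i
    proof -
      have "real (nat i) \<le> 10 * sqrt (real l)" using that mle unfolding s_def by simp
      then have "[(a + int (nat i)) ^ l = 1] (mod (int N))" by (rule hall)
      then have "[(a + i) ^ l = 1] (mod P)" using that cong_dvd_modulus[OF _ PN] by simp
      then show ?thesis unfolding Q_def .
    qed
    have roots: "card {y. 0 \<le> y \<and> y < P \<and> Q P l y} \<le> l"
      using roots_int[OF p(1) l0] unfolding Q_def P_def .
    have "real l = s * s" by (rule ls)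
    have "10 * s < 2 * (s * s)" using s100 by (simp add: mult_strict_right_mono)
    then have mP: "int m < P" using mle p(3) ls unfolding P_def by linarith
    have m8: "int m \<ge> 999" using mge s100 by linarith
    show False
    proof (cases "2 * (P - 1) \<le> int m * (int m - 4)")
      case True
      have hn: "\<exists>n. 1 \<le> n \<and> n < P \<and> \<not> Q P l n"
      proof (rule ccontr)
        assume "\<not> ?thesis"
        then have "{1..P - 1} \<subseteq> {y. 0 \<le> y \<and> y < P \<and> Q P l y}" by auto
        moreover have "finite {y. 0 \<le> y \<and> y < P \<and> Q P l y}" by (rule finite_subset[of _ "{0..P}"]) auto
        ultimately have "card {1..P - 1} \<le> l" using roots card_mono by (metis dual_order.trans)
        moreover have "card {1..P - 1} = p - 1" unfolding P_def by simp
        ultimately show False using p(3) l by linarith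
      qed
      show False using regimeS[OF Pp l0 _ mP True hB hn] m8 by linarith
    next
      case False
      define M where "M = (int m - 9) div 2"
      have M0: "M \<ge> 0" unfolding M_def using m8 by simp
      have M2: "2 * M \<le> int m - 9" "2 * M \<ge> int m - 10" unfolding M_def by linarith+
      have "(2 * M) * (2 * M) \<le> (int m - 9) * (int m - 9)" using M0 M2 by (intro mult_mono) auto
      moreover have "(int m - 9) * (int m - 9) = int m * (int m - 4) - 14 * int m + 81" by (simp add: algebra_simps)
      ultimately have MP: "2 * (M * M) < P" using False m8 by (simp add: algebra_simps)
      have hB': "Q P l (a + i)" if "0 \<le> i" "i \<le> M" for i using hB that M2 by simp
      note mc = main_count[OF Pp l0 M0 MP hB' roots]
      define Mr where "Mr = real_of_int M"
      define Hr where "Hr = real_of_int (M div 8)"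
      have e1: "real_of_int ((M + 1) * (M + 1)) = Mr * Mr + 2 * Mr + 1" unfolding Mr_def by (simp add: algebra_simps)
      have e2: "real_of_int ((2 * (M div 8) + 1) * (M div 8)) = 2 * (Hr * Hr) + Hr" unfolding Hr_def by (simp add: algebra_simps)
      have mc': "Mr * Mr + 2 * Mr + 1 \<le> 8 * (s * s) + 4 * Mr * Hr + (2 * (Hr * Hr) + Hr)"
        using mc unfolding e1 e2 ls Mr_def[symmetric] Hr_def[symmetric] .
      have H8: "Hr \<le> Mr / 8" unfolding Hr_def Mr_def using real_of_int_div4[of M 8] by simp
      have H0: "Hr \<ge> 0" unfolding Hr_def using M0 by simp
      have Mr0: "Mr \<ge> 0" unfolding Mr_def using M0 by simp
      have "2 * Mr \<ge> real m - 10" unfolding Mr_def using M2 by linarith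
      then have Ms: "Mr \<ge> 4.9 * s" using mge s100 by linarith
      have a1: "4 * Mr * Hr \<le> 4 * Mr * (Mr / 8)" using H8 Mr0 by (intro mult_left_mono) auto
      have a2: "Hr * Hr \<le> (Mr / 8) * (Mr / 8)" using H8 H0 by (intro mult_mono) auto
      have a3: "(4.9 * s) * (4.9 * s) \<le> Mr * Mr" using Ms s100 by (intro mult_mono) auto
      have "s * s > 0" using s100 by simp
      then show False using mc' H8 a1 a2 a3 Mr0 by (simp add: field_simps)
    qed
  qed
qed

end
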